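(* Equip $F^{\circ}[[T]]$ with the $(\pi,T)$-adic norm, making it an $F^{\circ}$-Banach module. Then $F^{\circ}[[T]]\widehat{\otimes}_{F^{\circ}}\underline{F}$ does not lie in the (essential) image of the functor $\mathrm{IndBan}_F\to\mathrm{IndBan}_{\underline F}$, $V\mapsto\underline V$.
   Context: $F$ is a complete non-trivially valued non-Archimedean field with pseudo-uniformiser $\pi$ and unit ball $F^{\circ}$. $\mathrm{IndBan}_{F^{\circ}}$, $\mathrm{IndBan}_F$ are the ind-completions of the categories of $F^{\circ}$-Banach modules, resp. $F$-Banach spaces, with bounded linear maps and completed projective tensor product extended along formal colimits. $\underline{F}:=\text{“}\varinjlim_{x\mapsto\pi x}\text{''}F^{\circ}$ is a monoid in $\mathrm{IndBan}_{F^{\circ}}$, and $\mathrm{IndBan}_{\underline F}$ its category of module objects; for $M\in\mathrm{IndBan}_{F^{\circ}}$, $M\widehat\otimes_{F^{\circ}}\underline F\cong\text{“}\varinjlim_{m\mapsto \pi m}\text{''}M$. For an $F$-Banach space $V$ with unit ball $V^{\circ}$, $\underline V:=\text{“}\varinjlim_{v\mapsto\pi v}\text{''}V^{\circ}$; a bounded $f:V\to W$ with $f(V^{\circ})\subseteq\pi^rW^{\circ}$ induces $\underline f$ via $\pi^{-i}V^{\circ}\to\pi^{r-i}W^{\circ}$; the functor is extended to $\mathrm{IndBan}_F$ by commuting with formal filtered colimits. The $(\pi,T)$-adic norm is $\|x\|=c^{-v}$ with $c>1$ fixed and $v$ maximal with $x\in(\pi,T)^v$. *)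

theory Defs
  imports "HOL-Computational_Algebra.Formal_Power_Series"
begin

definition nonarch_field :: "('k::field \<Rightarrow> real) \<Rightarrow> bool" where
  "nonarch_field av \<longleftrightarrow>
     (\<forall>x. av x \<ge> 0) \<and> (\<forall>x. av x = 0 \<longleftrightarrow> x = 0) \<and>
     (\<forall>x y. av (x * y) = av x * av y) \<and>
     (\<forall>x y. av (x + y) \<le> max (av x) (av y)) \<and>
     (\<exists>x. av x \<noteq> 0 \<and> av x \<noteq> 1) \<and>
     (\<forall>s :: nat \<Rightarrow> 'k. (\<forall>e>0. \<exists>N. \<forall>m\<ge>N. \<forall>n\<ge>N. av (s m - s n) < e) \<longrightarrow>
         (\<exists>l. (\<lambda>n. av (s n - l)) \<longlonglongrightarrow> 0))"

definition pseudo_unif :: "('k::field \<Rightarrow> real) \<Rightarrow> 'k \<Rightarrow> bool" where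
  "pseudo_unif av p \<longleftrightarrow> 0 < av p \<and> av p < 1"

definition nbanach :: "('k::field \<Rightarrow> real) \<Rightarrow> ('k \<Rightarrow> 'v::ab_group_add \<Rightarrow> 'v)
    \<Rightarrow> 'v set \<Rightarrow> ('v \<Rightarrow> real) \<Rightarrow> bool" where
  "nbanach av sc S N \<longleftrightarrow>
     0 \<in> S \<and> (\<forall>x\<in>S. \<forall>y\<in>S. x + y \<in> S) \<and> (\<forall>x\<in>S. - x \<in> S) \<and>
     (\<forall>a. \<forall>x\<in>S. sc a x \<in> S) \<and>
     (\<forall>x\<in>S. sc 1 x = x) \<and>
     (\<forall>a b. \<forall>x\<in>S. sc (a * b) x = sc a (sc b x)) \<and>
     (\<forall>a b. \<forall>x\<in>S. sc (a + b) x = sc a x + sc b x) \<and>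
     (\<forall>a. \<forall>x\<in>S. \<forall>y\<in>S. sc a (x + y) = sc a x + sc a y) \<and>
     (\<forall>x\<in>S. N x \<ge> 0) \<and> (\<forall>x\<in>S. N x = 0 \<longleftrightarrow> x = 0) \<and>
     (\<forall>x\<in>S. \<forall>y\<in>S. N (x + y) \<le> max (N x) (N y)) \<and>
     (\<forall>a. \<forall>x\<in>S. N (sc a x) = av a * N x) \<and>
     (\<forall>s :: nat \<Rightarrow> 'v. (\<forall>n. s n \<in> S) \<longrightarrow>
        (\<forall>e>0. \<exists>K. \<forall>m\<ge>K. \<forall>n\<ge>K. N (s m - s n) < e) \<longrightarrow>
        (\<exists>l\<in>S. (\<lambda>n. N (s n - l)) \<longlonglongrightarrow> 0))"

definition bdd_Flin :: "('k \<Rightarrow> 'm::ab_group_add \<Rightarrow> 'm) \<Rightarrow> ('k \<Rightarrow> 'n::ab_group_add \<Rightarrow> 'n)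
    \<Rightarrow> 'm set \<Rightarrow> ('m \<Rightarrow> real) \<Rightarrow> 'n set \<Rightarrow> ('n \<Rightarrow> real) \<Rightarrow> ('m \<Rightarrow> 'n) \<Rightarrow> bool" where
  "bdd_Flin s1 s2 C1 N1 C2 N2 g \<longleftrightarrow>
     (\<forall>x\<in>C1. g x \<in> C2) \<and> (\<forall>x\<in>C1. \<forall>y\<in>C1. g (x + y) = g x + g y) \<and>
     (\<forall>a. \<forall>x\<in>C1. g (s1 a x) = s2 a (g x)) \<and>
     (\<exists>K. \<forall>x\<in>C1. N2 (g x) \<le> K * N1 x)"

definition bdd_lin :: "('k \<Rightarrow> real) \<Rightarrow> ('k \<Rightarrow> 'm::ab_group_add \<Rightarrow> 'm) \<Rightarrow> ('k \<Rightarrow> 'n::ab_group_add \<Rightarrow> 'n)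
    \<Rightarrow> 'm set \<Rightarrow> ('m \<Rightarrow> real) \<Rightarrow> 'n set \<Rightarrow> ('n \<Rightarrow> real) \<Rightarrow> ('m \<Rightarrow> 'n) \<Rightarrow> bool" where
  "bdd_lin av s1 s2 C1 N1 C2 N2 g \<longleftrightarrow>
     (\<forall>x\<in>C1. g x \<in> C2) \<and> (\<forall>x\<in>C1. \<forall>y\<in>C1. g (x + y) = g x + g y) \<and>
     (\<forall>a. av a \<le> 1 \<longrightarrow> (\<forall>x\<in>C1. g (s1 a x) = s2 a (g x))) \<and>
     (\<exists>K. \<forall>x\<in>C1. N2 (g x) \<le> K * N1 x)"

definition directed_preorder :: "('i \<Rightarrow> 'i \<Rightarrow> bool) \<Rightarrow> bool" where
  "directed_preorder le \<longleftrightarrow> (\<forall>i. le i i) \<and> (\<forall>i j k. le i j \<longrightarrow> le j k \<longrightarrow> le i k) \<and>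
     (\<forall>i j. \<exists>k. le i k \<and> le j k)"

definition ban_diagram :: "('k::field \<Rightarrow> real) \<Rightarrow> ('k \<Rightarrow> 'v::ab_group_add \<Rightarrow> 'v)
   \<Rightarrow> ('i \<Rightarrow> 'i \<Rightarrow> bool) \<Rightarrow> ('i \<Rightarrow> 'v set) \<Rightarrow> ('i \<Rightarrow> 'v \<Rightarrow> real) \<Rightarrow> ('i \<Rightarrow> 'i \<Rightarrow> 'v \<Rightarrow> 'v) \<Rightarrow> bool" where
  "ban_diagram av sc le V nV f \<longleftrightarrow>
     directed_preorder le \<and> (\<forall>i. nbanach av sc (V i) (nV i)) \<and>
     (\<forall>i j. le i j \<longrightarrow> bdd_Flin sc sc (V i) (nV i) (V j) (nV j) (f i j)) \<and>
     (\<forall>i. \<forall>x\<in>V i. f i i x = x) \<and>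
     (\<forall>i j k. le i j \<longrightarrow> le j k \<longrightarrow> (\<forall>x\<in>V i. f j k (f i j x) = f i k x))"

text \<open>An ind-object is given by a directed preorder le, components C a (with norms N a)
  and transitions t a b for le a b. A morphism X \<rightarrow> Y is represented by an element of
  lim_a colim_b Hom(X_a, Y_b): for each a an index beta a and a bounded map phi a.\<close>

definition ind_hom ::
  "('k \<Rightarrow> real) \<Rightarrow> ('k \<Rightarrow> 'm::ab_group_add \<Rightarrow> 'm) \<Rightarrow> ('k \<Rightarrow> 'n::ab_group_add \<Rightarrow> 'n)
   \<Rightarrow> ('a \<Rightarrow> 'a \<Rightarrow> bool) \<Rightarrow> ('a \<Rightarrow> 'm set) \<Rightarrow> ('a \<Rightarrow> 'm \<Rightarrow> real) \<Rightarrow> ('a \<Rightarrow> 'a \<Rightarrow> 'm \<Rightarrow> 'm)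
   \<Rightarrow> ('b \<Rightarrow> 'b \<Rightarrow> bool) \<Rightarrow> ('b \<Rightarrow> 'n set) \<Rightarrow> ('b \<Rightarrow> 'n \<Rightarrow> real) \<Rightarrow> ('b \<Rightarrow> 'b \<Rightarrow> 'n \<Rightarrow> 'n)
   \<Rightarrow> ('a \<Rightarrow> 'b) \<Rightarrow> ('a \<Rightarrow> 'm \<Rightarrow> 'n) \<Rightarrow> bool" where
  "ind_hom av s1 s2 le1 C1 N1 t1 le2 C2 N2 t2 beta phi \<longleftrightarrow>
     (\<forall>a. bdd_lin av s1 s2 (C1 a) (N1 a) (C2 (beta a)) (N2 (beta a)) (phi a)) \<and>
     (\<forall>a a'. le1 a a' \<longrightarrow> (\<exists>b. le2 (beta a) b \<and> le2 (beta a') b \<and>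
        (\<forall>x\<in>C1 a. t2 (beta a) b (phi a x) = t2 (beta a') b (phi a' (t1 a a' x)))))"

text \<open>Equality of two represented morphisms (they agree in the colimit over the target).\<close>
definition ind_eq ::
  "('a \<Rightarrow> 'm set) \<Rightarrow> ('b \<Rightarrow> 'b \<Rightarrow> bool) \<Rightarrow> ('b \<Rightarrow> 'b \<Rightarrow> 'n \<Rightarrow> 'n)
   \<Rightarrow> ('a \<Rightarrow> 'b) \<Rightarrow> ('a \<Rightarrow> 'm \<Rightarrow> 'n) \<Rightarrow> ('a \<Rightarrow> 'b) \<Rightarrow> ('a \<Rightarrow> 'm \<Rightarrow> 'n) \<Rightarrow> bool" where
  "ind_eq C1 le2 t2 beta phi gamma psi \<longleftrightarrow>
     (\<forall>a. \<exists>b. le2 (beta a) b \<and> le2 (gamma a) b \<and>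
        (\<forall>x\<in>C1 a. t2 (beta a) b (phi a x) = t2 (gamma a) b (psi a x)))"

definition ind_iso ::
  "('k \<Rightarrow> real) \<Rightarrow> ('k \<Rightarrow> 'm::ab_group_add \<Rightarrow> 'm) \<Rightarrow> ('k \<Rightarrow> 'n::ab_group_add \<Rightarrow> 'n)
   \<Rightarrow> ('a \<Rightarrow> 'a \<Rightarrow> bool) \<Rightarrow> ('a \<Rightarrow> 'm set) \<Rightarrow> ('a \<Rightarrow> 'm \<Rightarrow> real) \<Rightarrow> ('a \<Rightarrow> 'a \<Rightarrow> 'm \<Rightarrow> 'm)
   \<Rightarrow> ('b \<Rightarrow> 'b \<Rightarrow> bool) \<Rightarrow> ('b \<Rightarrow> 'n set) \<Rightarrow> ('b \<Rightarrow> 'n \<Rightarrow> real) \<Rightarrow> ('b \<Rightarrow> 'b \<Rightarrow> 'n \<Rightarrow> 'n)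
   \<Rightarrow> bool" where
  "ind_iso av s1 s2 le1 C1 N1 t1 le2 C2 N2 t2 \<longleftrightarrow>
     (\<exists>beta phi gamma psi.
        ind_hom av s1 s2 le1 C1 N1 t1 le2 C2 N2 t2 beta phi \<and>
        ind_hom av s2 s1 le2 C2 N2 t2 le1 C1 N1 t1 gamma psi \<and>
        ind_eq C1 le1 t1 (\<lambda>a. gamma (beta a)) (\<lambda>a x. psi (beta a) (phi a x)) (\<lambda>a. a) (\<lambda>a x. x) \<and>
        ind_eq C2 le2 t2 (\<lambda>b. beta (gamma b)) (\<lambda>b x. phi (gamma b) (psi b x)) (\<lambda>b. b) (\<lambda>b x. x))"

definition unit_ball :: "('v \<Rightarrow> real) \<Rightarrow> 'v set \<Rightarrow> 'v set" where
  "unit_ball N S = {x \<in> S. N x \<le> 1}"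

text \<open>For V = "colim"_i V_i, underline V = "colim"_i "colim"_{v\<mapsto>\<pi>v} V_i^o. We present this
  double formal colimit as one diagram indexed by pairs (i,n) (n-th copy of V_i^o, standing
  for \<pi>^-n V_i^o), where (i,n) \<le> (j,m) iff i \<le> j and the induced map
  x \<mapsto> \<pi>^(m-n) f_ij x sends V_i^o into V_j^o; this map is the transition.\<close>
definition ul_le :: "('k::field \<Rightarrow> 'v::ab_group_add \<Rightarrow> 'v) \<Rightarrow> 'k \<Rightarrow> ('i \<Rightarrow> 'i \<Rightarrow> bool)
   \<Rightarrow> ('i \<Rightarrow> 'v set) \<Rightarrow> ('i \<Rightarrow> 'v \<Rightarrow> real) \<Rightarrow> ('i \<Rightarrow> 'i \<Rightarrow> 'v \<Rightarrow> 'v)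
   \<Rightarrow> 'i \<times> nat \<Rightarrow> 'i \<times> nat \<Rightarrow> bool" where
  "ul_le sc p le V nV f = (\<lambda>(i, n) (j, m). le i j \<and>
     (\<forall>x\<in>unit_ball (nV i) (V i). sc (p powi (int m - int n)) (f i j x) \<in> unit_ball (nV j) (V j)))"

definition ul_C :: "('i \<Rightarrow> 'v set) \<Rightarrow> ('i \<Rightarrow> 'v \<Rightarrow> real) \<Rightarrow> 'i \<times> nat \<Rightarrow> 'v set" where
  "ul_C V nV = (\<lambda>(i, n). unit_ball (nV i) (V i))"

definition ul_N :: "('i \<Rightarrow> 'v \<Rightarrow> real) \<Rightarrow> 'i \<times> nat \<Rightarrow> 'v \<Rightarrow> real" where
  "ul_N nV = (\<lambda>(i, n). nV i)"

definition ul_t :: "('k::field \<Rightarrow> 'v \<Rightarrow> 'v) \<Rightarrow> 'k \<Rightarrow> ('i \<Rightarrow> 'i \<Rightarrow> 'v \<Rightarrow> 'v)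
   \<Rightarrow> 'i \<times> nat \<Rightarrow> 'i \<times> nat \<Rightarrow> 'v \<Rightarrow> 'v" where
  "ul_t sc p f = (\<lambda>(i, n) (j, m) x. sc (p powi (int m - int n)) (f i j x))"

definition Fo_fps :: "('k::field \<Rightarrow> real) \<Rightarrow> 'k fps set" where
  "Fo_fps av = {g. \<forall>k. av (fps_nth g k) \<le> 1}"

text \<open>The ideal power (\<pi>,T)^v of F\<open>\<^sup>\<circ>\<close>[[T]], generated by the monomials \<pi>^(v-j) T^j.\<close>
definition piT_pow :: "('k::field \<Rightarrow> real) \<Rightarrow> 'k \<Rightarrow> nat \<Rightarrow> 'k fps set" where
  "piT_pow av p v = {g. \<exists>h. (\<forall>j\<le>v. h j \<in> Fo_fps av) \<and>
      g = (\<Sum>j\<le>v. fps_const (p ^ (v - j)) * fps_X ^ j * h j)}"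

definition adic_norm :: "('k::field \<Rightarrow> real) \<Rightarrow> 'k \<Rightarrow> real \<Rightarrow> 'k fps \<Rightarrow> real" where
  "adic_norm av p c g = (if g = 0 then 0 else c powr (- real (GREATEST v. g \<in> piT_pow av p v)))"

definition fps_smul :: "'k::field \<Rightarrow> 'k fps \<Rightarrow> 'k fps" where
  "fps_smul a g = fps_const a * g"

text \<open>M \<otimes> underline F = "colim"_{m\<mapsto>\<pi>m} M, indexed by nat, transition n \<le> m is \<pi>^(m-n).\<close>
definition tensF_t :: "'k::field \<Rightarrow> nat \<Rightarrow> nat \<Rightarrow> 'k fps \<Rightarrow> 'k fps" where
  "tensF_t p n m g = fps_const (p ^ (m - n)) * g"

end

theory Submission
  imports Defs
begin

lemma nf_mult: "nonarch_field av \<Longrightarrow> av (a*b) = av a * av b"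
  by (simp add: nonarch_field_def)

lemma nf_zero: "nonarch_field av \<Longrightarrow> av 0 = 0"
  by (simp add: nonarch_field_def)

lemma nf_nonneg: "nonarch_field av \<Longrightarrow> av a \<ge> 0"
  by (simp add: nonarch_field_def)

lemma nf_one: assumes "nonarch_field av" shows "av 1 = 1"
proof -
  have "av 1 = av 1 * av 1" using nf_mult[OF assms, of 1 1] by simp
  moreover have "av 1 \<noteq> 0" using assms by (simp add: nonarch_field_def)
  ultimately show ?thesis by (metis mult_cancel_left1)
qed

lemma nf_pow: assumes "nonarch_field av" shows "av (a^n) = av a ^ n"
  by (induction n) (simp_all add: nf_one[OF assms] nf_mult[OF assms])

lemma nf_inv: assumes "nonarch_field av" "a \<noteq> 0" shows "av (inverse a) = inverse (av a)"
proof -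
  have "av a * av (inverse a) = 1" using nf_mult[OF assms(1), of a "inverse a"] assms nf_one[OF assms(1)] by simp
  moreover have "av a \<noteq> 0" using assms by (simp add: nonarch_field_def)
  ultimately show ?thesis by (metis inverse_unique mult.commute)
qed

lemma nf_sum: assumes "nonarch_field av" "finite A" "\<forall>j\<in>A. av (t j) \<le> B" "0 \<le> B"
  shows "av (sum t A) \<le> B"
  using assms(2,3)
proof (induction A rule: finite_induct)
  case empty then show ?case using nf_zero[OF assms(1)] assms(4) by simp
next
  case (insert x F)
  have "av (sum t (insert x F)) = av (t x + sum t F)" using insert by simp
  also have "\<dots> \<le> max (av (t x)) (av (sum t F))" using assms(1) by (simp add: nonarch_field_def)
  also have "\<dots> \<le> B" using insert by simp
  finally show ?case .
qed

lemma Fo_one: "nonarch_field av \<Longrightarrow> (1::'k::field fps) \<in> Fo_fps av"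
  by (auto simp: Fo_fps_def nf_one nf_zero)

lemma Fo_zero: "nonarch_field av \<Longrightarrow> (0::'k::field fps) \<in> Fo_fps av"
  by (auto simp: Fo_fps_def nf_zero)

lemma Fo_X: "nonarch_field av \<Longrightarrow> (fps_X ^ k::'k::field fps) \<in> Fo_fps av"
  by (auto simp: Fo_fps_def nf_one nf_zero)

lemma Xk_in_piT: assumes "nonarch_field av" shows "(fps_X ^ k :: 'k::field fps) \<in> piT_pow av p k"
proof -
  define h where "h = (\<lambda>j. if j = k then (1::'k fps) else 0)"
  have "(\<Sum>j\<le>k. fps_const (p ^ (k - j)) * fps_X ^ j * h j) = (\<Sum>j\<le>k. if j = k then fps_X ^ k else 0)"
    by (rule sum.cong) (auto simp: h_def)
  also have "\<dots> = fps_X ^ k" by simp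
  finally show ?thesis unfolding piT_pow_def
    by (intro CollectI exI[of _ h]) (auto simp: h_def Fo_one[OF assms] Fo_zero[OF assms])
qed

lemma Xk_not_piT: assumes "nonarch_field av" "pseudo_unif av p"
  and "(fps_X ^ k :: 'k::field fps) \<in> piT_pow av p v" shows "v \<le> k"
proof (rule ccontr)
  assume "\<not> v \<le> k"
  then have vk: "k < v" by simp
  obtain h where h: "\<forall>j\<le>v. h j \<in> Fo_fps av"
    and eq: "fps_X ^ k = (\<Sum>j\<le>v. fps_const (p ^ (v - j)) * fps_X ^ j * h j)"
    using assms(3) unfolding piT_pow_def by blast
  have q: "0 < av p" "av p < 1" using assms(2) by (auto simp: pseudo_unif_def)
  have "(1::'k) = fps_nth (fps_X ^ k :: 'k fps) k" by simp
  also have "\<dots> = (\<Sum>j\<le>v. fps_nth (fps_const (p ^ (v - j)) * fps_X ^ j * h j) k)"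
    by (subst eq) (simp add: fps_sum_nth)
  finally have one: "(1::'k) = (\<Sum>j\<le>v. fps_nth (fps_const (p ^ (v - j)) * fps_X ^ j * h j) k)" .
  have "av (\<Sum>j\<le>v. fps_nth (fps_const (p ^ (v - j)) * fps_X ^ j * h j) k) \<le> av p"
  proof (rule nf_sum[OF assms(1)])
    show "\<forall>j\<in>{..v}. av (fps_nth (fps_const (p ^ (v - j)) * fps_X ^ j * h j) k) \<le> av p"
    proof
      fix j assume j: "j \<in> {..v}"
      show "av (fps_nth (fps_const (p ^ (v - j)) * fps_X ^ j * h j) k) \<le> av p"
      proof (cases "k < j")
        case True
        then show ?thesis
          by (simp add: mult.assoc fps_X_power_mult_nth nf_zero[OF assms(1)] q less_imp_le)
      next
        case False
        have hb: "av (fps_nth (h j) (k - j)) \<le> 1" using h j by (auto simp: Fo_fps_def)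
        have "fps_nth (fps_const (p ^ (v - j)) * fps_X ^ j * h j) k = p ^ (v - j) * fps_nth (h j) (k - j)"
          using False by (simp add: mult.assoc fps_X_power_mult_nth)
        then have "av (fps_nth (fps_const (p ^ (v - j)) * fps_X ^ j * h j) k) = av p ^ (v - j) * av (fps_nth (h j) (k - j))"
          by (simp add: nf_mult[OF assms(1)] nf_pow[OF assms(1)])
        also have "\<dots> \<le> av p ^ (v - j)"
          using hb q by (simp add: mult_left_le)
        also have "\<dots> \<le> av p ^ 1"
          using False vk q by (intro power_decreasing) auto
        finally show ?thesis by simp
      qed
    qed
  qed (use q in auto)
  then have "av (1::'k) \<le> av p" using one by simp
  then show False using nf_one[OF assms(1)] q by simp
qed

lemma adic_Xk: assumes "nonarch_field av" "pseudo_unif av p"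
  shows "adic_norm av p c (fps_X ^ k :: 'k::field fps) = c powr (- real k)"
proof -
  have "(GREATEST v. (fps_X ^ k :: 'k fps) \<in> piT_pow av p v) = k"
    by (rule Greatest_equality) (auto intro: Xk_in_piT[OF assms(1)] Xk_not_piT[OF assms])
  moreover have "(fps_X ^ k :: 'k fps) \<noteq> 0" by simp
  ultimately show ?thesis by (simp add: adic_norm_def)
qed

theorem lemma2p40:
  fixes av :: "'k::field \<Rightarrow> real" and p :: 'k and c :: real
    and sc :: "'k \<Rightarrow> 'v::ab_group_add \<Rightarrow> 'v"
    and le :: "'i \<Rightarrow> 'i \<Rightarrow> bool" and V :: "'i \<Rightarrow> 'v set" and nV :: "'i \<Rightarrow> 'v \<Rightarrow> real"
    and f :: "'i \<Rightarrow> 'i \<Rightarrow> 'v \<Rightarrow> 'v"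
  assumes "nonarch_field av" and "pseudo_unif av p" and "c > 1"
    and "ban_diagram av sc le V nV f"
  shows "\<not> ind_iso av sc fps_smul
            (ul_le sc p le V nV f) (ul_C V nV) (ul_N nV) (ul_t sc p f)
            (\<le>) (\<lambda>n. Fo_fps av) (\<lambda>n. adic_norm av p c) (tensF_t p)"
proof
  assume "ind_iso av sc fps_smul
            (ul_le sc p le V nV f) (ul_C V nV) (ul_N nV) (ul_t sc p f)
            (\<le>) (\<lambda>n. Fo_fps av) (\<lambda>n. adic_norm av p c) (tensF_t p)"
  then obtain beta phi gamma psi where
    H1: "ind_hom av sc fps_smul (ul_le sc p le V nV f) (ul_C V nV) (ul_N nV) (ul_t sc p f)
            (\<le>) (\<lambda>n. Fo_fps av) (\<lambda>n. adic_norm av p c) (tensF_t p) beta phi"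
    and H2: "ind_hom av fps_smul sc (\<le>) (\<lambda>n. Fo_fps av) (\<lambda>n. adic_norm av p c) (tensF_t p)
            (ul_le sc p le V nV f) (ul_C V nV) (ul_N nV) (ul_t sc p f) gamma psi"
    and E2: "ind_eq (\<lambda>n. Fo_fps av) (\<le>) (tensF_t p) (\<lambda>b. beta (gamma b))
            (\<lambda>b x. phi (gamma b) (psi b x)) (\<lambda>b. b) (\<lambda>b x. x)"
    unfolding ind_iso_def by blast
  have nf: "nonarch_field av" by fact
  have q: "0 < av p" "av p < 1" using assms(2) by (auto simp: pseudo_unif_def)
  have p0: "p \<noteq> 0" using q nf_zero[OF nf] by auto
  obtain i n where gi: "gamma 0 = (i, n)" by (cases "gamma 0") auto
  obtain b' where bb: "beta (gamma 0) \<le> b'"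
    and comp: "\<forall>x\<in>Fo_fps av. tensF_t p (beta (gamma 0)) b' (phi (gamma 0) (psi 0 x)) = tensF_t p 0 b' x"
    using E2 unfolding ind_eq_def by blast
  have bl_psi: "bdd_lin av fps_smul sc (Fo_fps av) (adic_norm av p c)
      (unit_ball (nV i) (V i)) (nV i) (psi 0)"
  proof -
    have "bdd_lin av fps_smul sc (Fo_fps av) (adic_norm av p c)
      (ul_C V nV (gamma 0)) (ul_N nV (gamma 0)) (psi 0)" using H2 unfolding ind_hom_def by blast
    then show ?thesis by (simp add: gi ul_C_def ul_N_def)
  qed
  have bl_phi: "bdd_lin av sc fps_smul (unit_ball (nV i) (V i)) (nV i) (Fo_fps av) (adic_norm av p c) (phi (gamma 0))"
  proof -
    have "bdd_lin av sc fps_smul (ul_C V nV (gamma 0)) (ul_N nV (gamma 0)) (Fo_fps av) (adic_norm av p c) (phi (gamma 0))"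
      using H1 unfolding ind_hom_def by blast
    then show ?thesis by (simp add: gi ul_C_def ul_N_def)
  qed
  obtain K where K: "\<forall>x\<in>Fo_fps av. nV i (psi 0 x) \<le> K * adic_norm av p c x"
    using bl_psi unfolding bdd_lin_def by blast
  have psi_in: "\<forall>x\<in>Fo_fps av. psi 0 x \<in> unit_ball (nV i) (V i)"
    using bl_psi unfolding bdd_lin_def by blast
  have nb: "nbanach av sc (V i) (nV i)" using assms(4) unfolding ban_diagram_def by blast
  define N where "N = Suc b'"
  have qN: "0 < av p ^ N" using q by simp
  obtain k where k: "max K 1 / av p ^ N < c ^ k" using real_arch_pow[OF assms(3)] by blast
  have ck: "c powr (- real k) = inverse (c ^ k)" using assms(3)
    by (simp add: powr_minus powr_realpow)
  have ckpos: "0 < c ^ k" using assms(3) by simp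
  define x where "x = (fps_X ^ k :: 'k fps)"
  have xF: "x \<in> Fo_fps av" unfolding x_def by (rule Fo_X[OF nf])
  define y where "y = psi 0 x"
  have yV: "y \<in> V i" using psi_in xF by (auto simp: y_def unit_ball_def)
  have "nV i y \<le> K * inverse (c ^ k)"
    using K[rule_format, OF xF] adic_Xk[OF nf assms(2), of c k] ck by (simp add: y_def x_def)
  also have "\<dots> \<le> max K 1 * inverse (c ^ k)" using ckpos by (intro mult_right_mono) auto
  also have "\<dots> < av p ^ N"
  proof -
    have "max K 1 < av p ^ N * c ^ k" using k qN by (simp add: field_simps)
    then show ?thesis using ckpos by (simp add: field_simps)
  qed
  finally have ny: "nV i y < av p ^ N" .
  define z where "z = sc (inverse (p ^ N)) y"
  have zV: "z \<in> V i" using nb yV unfolding nbanach_def z_def by blast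
  have "nV i z = av (inverse (p ^ N)) * nV i y" using nb yV unfolding nbanach_def z_def by blast
  also have "\<dots> = inverse (av p ^ N) * nV i y" using nf_inv[OF nf] nf_pow[OF nf] p0 by simp
  finally have "nV i z \<le> 1" using ny qN by (simp add: field_simps)
  then have zB: "z \<in> unit_ball (nV i) (V i)" using zV by (simp add: unit_ball_def)
  have yz: "sc (p ^ N) z = y"
  proof -
    have "sc (p ^ N) z = sc (p ^ N * inverse (p ^ N)) y"
      using nb yV unfolding nbanach_def z_def by metis
    also have "\<dots> = y" using p0 nb yV unfolding nbanach_def by simp
    finally show ?thesis .
  qed
  have avpN: "av (p ^ N) \<le> 1" using nf_pow[OF nf] q by (simp add: power_le_one)
  have phiy: "phi (gamma 0) y = fps_const (p ^ N) * phi (gamma 0) z"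
    using bl_phi zB avpN yz unfolding bdd_lin_def fps_smul_def by metis
  have phizF: "phi (gamma 0) z \<in> Fo_fps av" using bl_phi zB unfolding bdd_lin_def by blast
  define a where "a = fps_nth (phi (gamma 0) z) k"
  have a1: "av a \<le> 1" using phizF by (simp add: Fo_fps_def a_def)
  have "fps_const (p ^ (b' - beta (gamma 0))) * (fps_const (p ^ N) * phi (gamma 0) z) = fps_const (p ^ b') * x"
  proof -
    have "fps_const (p ^ (b' - beta (gamma 0))) * phi (gamma 0) (psi 0 x) = fps_const (p ^ b') * x"
      using comp xF by (simp add: tensF_t_def)
    then show ?thesis using phiy by (simp add: y_def)
  qed
  then have "fps_nth (fps_const (p ^ (b' - beta (gamma 0))) * (fps_const (p ^ N) * phi (gamma 0) z)) k = fps_nth (fps_const (p ^ b') * x) k"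
    by simp
  then have "p ^ (b' - beta (gamma 0)) * (p ^ N * a) = p ^ b'"
    by (simp add: x_def a_def)
  then have "av (p ^ (b' - beta (gamma 0)) * (p ^ N * a)) = av (p ^ b')" by simp
  then have eqa: "av p ^ (b' - beta (gamma 0)) * (av p ^ N * av a) = av p ^ b'"
    by (simp add: nf_mult[OF nf] nf_pow[OF nf])
  have l1: "av p ^ (b' - beta (gamma 0)) \<le> 1" using q by (simp add: power_le_one)
  have l0: "0 \<le> av a" using nf_nonneg[OF nf] .
  have "av p ^ N * av a \<le> av p ^ N" using a1 qN l0 by (simp add: mult_left_le)
  moreover have "av p ^ (b' - beta (gamma 0)) * (av p ^ N * av a) \<le> av p ^ N * av a"
    using mult_left_le_one_le[of "av p ^ N * av a" "av p ^ (b' - beta (gamma 0))"] l1 l0 qN q by simp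
  ultimately have "av p ^ b' \<le> av p ^ N" using eqa by linarith
  moreover have "av p ^ N < av p ^ b'" using q by (simp add: N_def)
  ultimately show False by simp
qed

end
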